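(* Let $\zeta=(m+r+\ell)/(m+r)$ be the money multiplier. (i) In an ample-reserves equilibrium, if aggregate cash $m$ is sufficiently small (holding the other equilibrium quantities and their derivatives fixed), then $\partial\zeta/\partial i>0$ and $\partial\zeta/\partial i_r<0$. (ii) Suppose $L^{-1}(i_\ell)>\bar\delta$. In both ample-reserves and scarce-reserves equilibria, if $m>0$ and $\chi<1$, then $\partial\zeta/\partial\bar\delta<0$.
   Context: Buyers meet sellers in one of three meeting types with probabilities $\sigma_1,\sigma_2,\sigma_3>0$ ($\sum\sigma_j=1$); type-1 buyers can only use cash, type-2 buyers can use cash, deposits and bank notes, type-3 buyers can additionally use unsecured credit up to a limit $\bar\delta\ge0$. DM preferences $u,c$ with $u'>0,u''<0$, $c'>0,c''\ge0$, $u(0)=c(0)=0$, $q^*$ solving $u'(q^* )=c'(q^* )$; bargaining power $\theta\in(0,1]$, payment $v(q)=(1-\theta)u(q)+\theta c(q)$, liquidity premium $\lambda(q)=\theta[u'(q)-c'(q)]/[(1-\theta)u'(q)+\theta c'(q)]$ for $q<q^*$ and $0$ otherwise, $L(z)=\lambda(\min\{q^*,v^{-1}(z)\})$ with decreasing inverse $L^{-1}$. Policy: nominal rate $i\ge0$, interest on reserves $i_r$, reserve requirement $\chi\in(0,1)$, $a=(1-\chi)/\chi$. Bank cost functions $\gamma,\eta$ twice differentiable with $\gamma',\gamma'',\eta',\eta''>0$ on $(0,\infty)$, $\gamma(0)=\gamma'(0)=\eta(0)=\eta'(0)=0$; entry cost $k>0$; $1+i=(1+i_d)(1+i_\ell)$.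 There is a measure $n$ of identical banks each holding reserves $\tilde r$ and lending $\tilde\ell$; aggregate reserves $r=n\tilde r$, aggregate loans (bank notes) $\ell=n\tilde\ell$; aggregate cash $m=\sum_j\sigma_jm_j$ is held only by type-1 buyers in banking equilibria, $m=\sigma_1L^{-1}(i)$ (decreasing in $i$). Ample-reserves equilibrium: $(\tilde r,\tilde\ell)$ solve $[1+\eta'(\tilde\ell)][1+i_r-\gamma'(\tilde r)]=1+i$ and $\gamma'(\tilde r)\tilde r-\gamma(\tilde r)+\eta'(\tilde\ell)\tilde\ell-\eta(\tilde\ell)=k$, $i_d=i_r-\gamma'(\tilde r)$, $i_\ell=\eta'(\tilde\ell)$, $\tilde\ell<a\tilde r$; $n$ solves $(\sigma_2+\sigma_3)L^{-1}(i_\ell)-\sigma_3\bar\delta=n[(1+i_d)\tilde r+\tilde\ell]$. Scarce-reserves equilibrium: $\tilde\ell=a\tilde r$ (so $\ell=ar$ and $\zeta=(m+r/\chi)/(m+r)$), $(\tilde r,i_d)$ solve $\gamma'(\tilde r)\tilde r-\gamma(\tilde r)+\eta'(a\tilde r)a\tilde r-\eta(a\tilde r)=k$ and $i_d=i_r-\gamma'(\tilde r)+[i_\ell-\eta'(a\tilde r)]a$, and $r=\frac{(\sigma_2+\sigma_3)\chi}{1+i_d\chi}L^{-1}(i_\ell)-\frac{\sigma_3\bar\delta\chi}{1+i_d\chi}$. *)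

theory Defs
  imports Complex_Main
begin

definition money_multiplier :: "real \<Rightarrow> real \<Rightarrow> real \<Rightarrow> real" where
  "money_multiplier m r l = (m + r + l) / (m + r)"

definition acoef :: "real \<Rightarrow> real" where
  "acoef \<chi> = (1 - \<chi>) / \<chi>"

text \<open>Measure of banks in an ample-reserves equilibrium, solving
  (sigma2+sigma3) Linv(i_l) - sigma3 dbar = n ((1+i_d) rt + lt),
  with i_d = i_r - gamma'(rt), i_l = eta'(lt).\<close>
definition ample_nbanks ::
  "(real \<Rightarrow> real) \<Rightarrow> real \<Rightarrow> real \<Rightarrow> real \<Rightarrow> (real \<Rightarrow> real) \<Rightarrow> (real \<Rightarrow> real)
   \<Rightarrow> real \<Rightarrow> real \<Rightarrow> real \<Rightarrow> real" where
  "ample_nbanks Linv \<sigma>\<^sub>2 \<sigma>\<^sub>3 \<delta> g' e' ir rt lt =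
     ((\<sigma>\<^sub>2 + \<sigma>\<^sub>3) * Linv (e' lt) - \<sigma>\<^sub>3 * \<delta>) / ((1 + (ir - g' rt)) * rt + lt)"

text \<open>Ample-reserves equilibrium at policy (i, i_r) and credit limit dbar:
  individual bank reserves rt and loans lt (both positive), the two bank
  conditions, the non-binding reserve requirement lt < a rt, and a positive
  measure of banks n.\<close>
definition ample_eq ::
  "(real \<Rightarrow> real) \<Rightarrow> real \<Rightarrow> real \<Rightarrow> real \<Rightarrow>
   (real \<Rightarrow> real) \<Rightarrow> (real \<Rightarrow> real) \<Rightarrow> (real \<Rightarrow> real) \<Rightarrow> (real \<Rightarrow> real) \<Rightarrow>
   real \<Rightarrow> real \<Rightarrow> real \<Rightarrow> real \<Rightarrow> real \<Rightarrow> real \<Rightarrow> bool" where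
  "ample_eq Linv \<sigma>\<^sub>2 \<sigma>\<^sub>3 \<delta> g g' e e' k \<chi> i ir rt lt \<longleftrightarrow>
     0 < rt \<and> 0 < lt \<and>
     (1 + e' lt) * (1 + ir - g' rt) = 1 + i \<and>
     g' rt * rt - g rt + e' lt * lt - e lt = k \<and>
     lt < acoef \<chi> * rt \<and>
     0 < ample_nbanks Linv \<sigma>\<^sub>2 \<sigma>\<^sub>3 \<delta> g' e' ir rt lt"

text \<open>Scarce-reserves equilibrium (bank side) at policy (i, i_r): lt = a rt,
  zero profit, the deposit-rate condition, 1+i = (1+i_d)(1+i_l), and the
  (binding) reserve requirement multiplier i_l - eta'(a rt) is nonnegative.\<close>
definition scarce_eq ::
  "(real \<Rightarrow> real) \<Rightarrow> (real \<Rightarrow> real) \<Rightarrow> (real \<Rightarrow> real) \<Rightarrow> (real \<Rightarrow> real) \<Rightarrow>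
   real \<Rightarrow> real \<Rightarrow> real \<Rightarrow> real \<Rightarrow> real \<Rightarrow> real \<Rightarrow> real \<Rightarrow> bool" where
  "scarce_eq g g' e e' k \<chi> i ir rt idr il \<longleftrightarrow>
     0 < rt \<and>
     g' rt * rt - g rt + e' (acoef \<chi> * rt) * (acoef \<chi> * rt) - e (acoef \<chi> * rt) = k \<and>
     idr = ir - g' rt + (il - e' (acoef \<chi> * rt)) * acoef \<chi> \<and>
     1 + i = (1 + idr) * (1 + il) \<and>
     e' (acoef \<chi> * rt) \<le> il"

definition scarce_reserves ::
  "(real \<Rightarrow> real) \<Rightarrow> real \<Rightarrow> real \<Rightarrow> real \<Rightarrow> real \<Rightarrow> real \<Rightarrow> real \<Rightarrow> real" where
  "scarce_reserves Linv \<sigma>\<^sub>2 \<sigma>\<^sub>3 \<delta> \<chi> idr il =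
     (\<sigma>\<^sub>2 + \<sigma>\<^sub>3) * \<chi> / (1 + idr * \<chi>) * Linv il - \<sigma>\<^sub>3 * \<delta> * \<chi> / (1 + idr * \<chi>)"

end

theory Submission
  imports Defs
begin



lemma at_deriv:
  assumes "\<forall>x\<ge>0. (f has_real_derivative f' x) (at x within {0..})"
  shows "\<forall>p>0. (f has_real_derivative f' p) (at p)"
proof (intro allI impI)
  fix x :: real assume x: "0 < x"
  have "(f has_real_derivative f' x) (at x within {0..})" using assms x by simp
  hence "(f has_real_derivative f' x) (at x within {0<..})"
    by (rule has_field_derivative_subset) auto
  thus "(f has_real_derivative f' x) (at x)" using at_within_open[of x "{0<..}"] x by simp
qed

lemma deriv_eq_ev:
  assumes "(f has_real_derivative a) (at x)" "(h has_real_derivative b) (at x)"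
    "eventually (\<lambda>y. f y = h y) (nhds x)"
  shows "a = b"
proof -
  have "(h has_real_derivative a) (at x)"
    using DERIV_cong_ev[OF refl assms(3) refl, of a] assms(1) by simp
  thus ?thesis using DERIV_unique assms(2) by blast
qed

lemma ev_pair:
  fixes U :: "(real \<times> real) set"
  assumes "open U" "(a, b) \<in> U"
  shows "eventually (\<lambda>y. (y, b) \<in> U) (nhds a)"
    "eventually (\<lambda>y. (a, y) \<in> U) (nhds b)"
proof -
  have "((\<lambda>y. (y, b)) \<longlongrightarrow> (a, b)) (nhds a)"
    by (intro tendsto_Pair filterlim_ident tendsto_const)
  thus "eventually (\<lambda>y. (y, b) \<in> U) (nhds a)" using topological_tendstoD assms by blast
  have "((\<lambda>y. (a, y)) \<longlongrightarrow> (a, b)) (nhds b)"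
    by (intro tendsto_Pair filterlim_ident tendsto_const)
  thus "eventually (\<lambda>y. (a, y) \<in> U) (nhds b)" using topological_tendstoD assms by blast
qed

lemma bank_eqs:
  fixes rt lt I IR g g' g'' e e' e'' :: "real \<Rightarrow> real"
  assumes G: "\<forall>p>0. (g has_real_derivative g' p)(at p)" "\<forall>p>0. (g' has_real_derivative g'' p)(at p)"
  and E: "\<forall>p>0. (e has_real_derivative e' p)(at p)" "\<forall>p>0. (e' has_real_derivative e'' p)(at p)"
  and pos: "0 < rt x" "0 < lt x"
  and dr: "(rt has_real_derivative r')(at x)" and dl: "(lt has_real_derivative l')(at x)"
  and dI: "(I has_real_derivative I')(at x)" and dIR: "(IR has_real_derivative IR')(at x)"
  and ev: "eventually (\<lambda>y. (1 + e'(lt y))*(1 + IR y - g'(rt y)) = 1 + I y \<and>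
              g'(rt y)*rt y - g(rt y) + e'(lt y)*lt y - e(lt y) = k) (nhds x)"
  shows "e''(lt x)*l'*(1 + IR x - g'(rt x)) + (1 + e'(lt x))*(IR' - g''(rt x)*r') = I'"
    and "g''(rt x)*r'*rt x + e''(lt x)*l'*lt x = 0"
proof -
  have h1: "((\<lambda>y. g'(rt y)) has_real_derivative g''(rt x)*r')(at x)"
    by (rule DERIV_chain2[OF G(2)[rule_format, OF pos(1)] dr])
  have h2: "((\<lambda>y. g(rt y)) has_real_derivative g'(rt x)*r')(at x)"
    by (rule DERIV_chain2[OF G(1)[rule_format, OF pos(1)] dr])
  have h3: "((\<lambda>y. e'(lt y)) has_real_derivative e''(lt x)*l')(at x)"
    by (rule DERIV_chain2[OF E(2)[rule_format, OF pos(2)] dl])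
  have h4: "((\<lambda>y. e(lt y)) has_real_derivative e'(lt x)*l')(at x)"
    by (rule DERIV_chain2[OF E(1)[rule_format, OF pos(2)] dl])
  have d1: "((\<lambda>y. (1 + e'(lt y))*(1 + IR y - g'(rt y))) has_real_derivative
      (0 + e''(lt x)*l') * (1 + IR x - g'(rt x)) + (0 + IR' - g''(rt x)*r') * (1 + e'(lt x)))(at x)"
    by (intro DERIV_mult DERIV_add DERIV_diff DERIV_const h3 h1 dIR)
  have d1': "((\<lambda>y. 1 + I y) has_real_derivative 0 + I')(at x)"
    by (intro DERIV_add DERIV_const dI)
  have "(0 + e''(lt x)*l') * (1 + IR x - g'(rt x)) + (0 + IR' - g''(rt x)*r') * (1 + e'(lt x)) = 0 + I'"
    by (rule deriv_eq_ev[OF d1 d1']) (use ev in \<open>auto elim: eventually_mono\<close>)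
  thus "e''(lt x)*l'*(1 + IR x - g'(rt x)) + (1 + e'(lt x))*(IR' - g''(rt x)*r') = I'"
    by (simp add: algebra_simps)
  have d2: "((\<lambda>y. g'(rt y)*rt y - g(rt y) + e'(lt y)*lt y - e(lt y)) has_real_derivative
     g''(rt x)*r' * rt x + r' * g'(rt x) - g'(rt x)*r' + (e''(lt x)*l' * lt x + l' * e'(lt x)) - e'(lt x)*l')(at x)"
    by (intro DERIV_mult DERIV_add DERIV_diff h1 h2 h3 h4 dr dl)
  have "g''(rt x)*r' * rt x + r' * g'(rt x) - g'(rt x)*r' + (e''(lt x)*l' * lt x + l' * e'(lt x)) - e'(lt x)*l' = 0"
    by (rule deriv_eq_ev[OF d2 DERIV_const[of k]]) (use ev in \<open>auto elim: eventually_mono\<close>)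
  thus "g''(rt x)*r'*rt x + e''(lt x)*l'*lt x = 0" by (simp add: algebra_simps)
qed

lemma nb_deriv:
  fixes rt lt IR Dl Linv g' g'' e' e'' :: "real \<Rightarrow> real"
  assumes G: "(g' has_real_derivative g'' (rt x))(at (rt x))"
  and E: "(e' has_real_derivative e'' (lt x))(at (lt x))"
  and Ld: "(Linv has_real_derivative Ld)(at (e' (lt x)))"
  and dr: "(rt has_real_derivative r')(at x)" and dl: "(lt has_real_derivative l')(at x)"
  and dD: "(Dl has_real_derivative Dl')(at x)" and dIR: "(IR has_real_derivative IR')(at x)"
  and den: "(1 + (IR x - g' (rt x))) * rt x + lt x \<noteq> 0"
  shows "((\<lambda>y. ample_nbanks Linv s2 s3 (Dl y) g' e' (IR y) (rt y) (lt y)) has_real_derivative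
     (((s2+s3)*(Ld*(e''(lt x)*l')) - s3*Dl') * ((1 + (IR x - g' (rt x))) * rt x + lt x)
      - ((s2 + s3) * Linv (e' (lt x)) - s3 * Dl x) * ((IR' - g''(rt x)*r')*rt x + (1 + (IR x - g'(rt x)))*r' + l'))
     / (((1 + (IR x - g' (rt x))) * rt x + lt x) * ((1 + (IR x - g' (rt x))) * rt x + lt x))) (at x)"
proof -
  have h1: "((\<lambda>y. g'(rt y)) has_real_derivative g''(rt x)*r')(at x)"
    by (rule DERIV_chain2[OF G dr])
  have h3: "((\<lambda>y. e'(lt y)) has_real_derivative e''(lt x)*l')(at x)"
    by (rule DERIV_chain2[OF E dl])
  have h5: "((\<lambda>y. Linv (e'(lt y))) has_real_derivative Ld*(e''(lt x)*l'))(at x)"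
    by (rule DERIV_chain2[OF Ld h3])
  have hn: "((\<lambda>y. (s2 + s3) * Linv (e' (lt y)) - s3 * Dl y) has_real_derivative (s2+s3)*(Ld*(e''(lt x)*l')) - s3*Dl')(at x)"
    by (intro DERIV_diff DERIV_cmult h5 dD)
  have hd: "((\<lambda>y. (1 + (IR y - g' (rt y))) * rt y + lt y) has_real_derivative
     (0 + (IR' - g''(rt x)*r')) * rt x + r' * (1 + (IR x - g' (rt x))) + l')(at x)"
    by (intro DERIV_add DERIV_mult DERIV_diff DERIV_const h1 dIR dr dl)
  show ?thesis unfolding ample_nbanks_def
    using DERIV_divide[OF hn hd den] by (simp add: algebra_simps)
qed

lemma alg_i:
  fixes a ep G E r l r' l' :: real
  assumes "0<a" "0<ep" "0<G" "0<E" "0<r" "0<l"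
    "E*l'*a + (1+ep)*(0 - G*r') = 1" "G*r'*r + E*l'*l = 0"
  shows "l'*r - l*r' > 0"
proof -
  have l'pos: "l' > 0"
  proof (rule ccontr)
    assume "\<not> l' > 0" hence "l' \<le> 0" by simp
    hence "E*l'*l \<le> 0" using assms by (simp add: mult_le_0_iff)
    hence "G*r'*r \<ge> 0" using assms by linarith
    hence "r' \<ge> 0" using assms by (simp add: zero_le_mult_iff)
    hence "(1+ep)*(G*r') \<ge> 0" using assms by simp
    moreover have "E*l'*a \<le> 0" using \<open>l' \<le> 0\<close> assms by (simp add: mult_le_0_iff)
    ultimately show False using assms(7) by (simp add: algebra_simps)
  qed
  have "E*l'*l > 0" using assms l'pos by simp
  hence "G*r'*r < 0" using assms by linarith
  hence "r' < 0" using assms by (simp add: mult_less_0_iff)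
  hence "l*r' < 0" using assms by (simp add: mult_less_0_iff)
  moreover have "l'*r > 0" using l'pos assms by simp
  ultimately show ?thesis by linarith
qed

lemma alg_ir:
  fixes a ep G E r l r' l' :: real
  assumes "0<a" "0<ep" "0<G" "0<E" "0<r" "0<l"
    "E*l'*a + (1+ep)*(1 - G*r') = 0" "G*r'*r + E*l'*l = 0"
  shows "l'*r - l*r' < 0"
proof -
  have l'neg: "l' < 0"
  proof (rule ccontr)
    assume "\<not> l' < 0" hence "l' \<ge> 0" by simp
    hence "E*l'*l \<ge> 0" using assms by simp
    hence "G*r'*r \<le> 0" using assms by linarith
    hence "r' \<le> 0" using assms by (simp add: mult_le_0_iff)
    hence "G*r' \<le> 0" using assms by (simp add: mult_le_0_iff)
    hence "(1+ep)*(1 - G*r') > 0" using assms by simp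
    moreover have "E*l'*a \<ge> 0" using \<open>l' \<ge> 0\<close> assms by simp
    ultimately show False using assms(7) by linarith
  qed
  have "E*l'*l < 0" using assms l'neg by (simp add: mult_less_0_iff)
  hence "G*r'*r > 0" using assms by linarith
  hence "r' > 0" using assms by (simp add: zero_less_mult_iff)
  hence "l*r' > 0" using assms by simp
  moreover have "l'*r < 0" using l'neg assms by (simp add: mult_less_0_iff)
  ultimately show ?thesis by linarith
qed

lemma alg_d:
  fixes a ep G E r l r' l' :: real
  assumes "0<a" "0<ep" "0<G" "0<E" "0<r" "0<l"
    "E*l'*a + (1+ep)*(0 - G*r') = 0" "G*r'*r + E*l'*l = 0"
  shows "l' = 0" "r' = 0"
proof -
  have "G*r' = - E*l'*l/r" using assms by (simp add: field_simps)
  hence "E*l'*a + (1+ep)*(E*l'*l/r) = 0" using assms(7) by simp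
  hence "E*l'*(a + (1+ep)*l/r) = 0" by (simp add: algebra_simps)
  moreover have "a + (1+ep)*l/r > 0" using assms by (simp add: add_pos_pos)
  ultimately show "l' = 0" using assms by simp
  thus "r' = 0" using assms by simp
qed

lemma small_pos:
  fixes A P :: real
  assumes "P > 0"
  shows "\<exists>\<epsilon>>0. \<forall>m0. 0 < m0 \<and> m0 < \<epsilon> \<longrightarrow> m0*A + P > 0"
proof (intro exI[of _ "P/(\<bar>A\<bar>+1)"] conjI allI impI)
  show "P/(\<bar>A\<bar>+1) > 0" using assms by simp
  fix m0 :: real assume h: "0 < m0 \<and> m0 < P/(\<bar>A\<bar>+1)"
  hence "m0*(\<bar>A\<bar>+1) < P" by (simp add: field_simps)
  moreover have "m0*A \<ge> - (m0*\<bar>A\<bar>)"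
  proof -
    have "m0 * (-\<bar>A\<bar>) \<le> m0*A" using h by (intro mult_left_mono) auto
    thus ?thesis by simp
  qed
  ultimately show "m0*A + P > 0" using h by (simp add: algebra_simps)
qed

lemma dec_deriv:
  fixes f :: "real \<Rightarrow> real"
  assumes "\<forall>x y. 0 \<le> x \<longrightarrow> x < y \<longrightarrow> f y < f x" "0 \<le> x0" "(f has_real_derivative D)(at x0)"
  shows "D \<le> 0"
proof (rule ccontr)
  assume "\<not> D \<le> 0"
  then obtain d where d: "d > 0" "\<forall>h>0. h < d \<longrightarrow> f x0 < f (x0 + h)"
    using DERIV_pos_inc_right[OF assms(3)] by auto
  hence "f x0 < f (x0 + d/2)" by simp
  moreover have "f (x0 + d/2) < f x0" using assms(1,2) d by simp
  ultimately show False by simp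
qed

lemma mm_deriv:
  fixes M R L :: "real \<Rightarrow> real"
  assumes "(M has_real_derivative M')(at x)" "(R has_real_derivative R')(at x)"
    "(L has_real_derivative L')(at x)" "M x + R x \<noteq> 0"
  shows "((\<lambda>y. money_multiplier (M y) (R y) (L y)) has_real_derivative
      (L' * (M x + R x) - L x * (M' + R')) / (M x + R x)^2) (at x)"
proof -
  have "((\<lambda>y. (M y + R y + L y) / (M y + R y)) has_real_derivative
     ((M' + R' + L') * (M x + R x) - (M x + R x + L x) * (M' + R')) / ((M x + R x) * (M x + R x))) (at x)"
    by (intro DERIV_divide DERIV_add assms)
  moreover have "((M' + R' + L') * (M x + R x) - (M x + R x + L x) * (M' + R')) / ((M x + R x) * (M x + R x))
     = (L' * (M x + R x) - L x * (M' + R')) / (M x + R x)^2"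
    by (simp add: power2_eq_square algebra_simps)
  ultimately show ?thesis unfolding money_multiplier_def by simp
qed

lemma small_m:
  fixes N r l M0 :: "real \<Rightarrow> real"
  assumes dN: "(N has_real_derivative N')(at x)" and dr: "(r has_real_derivative r')(at x)"
    and dl: "(l has_real_derivative l')(at x)" and dM: "(M0 has_real_derivative M')(at x)"
    and M0x: "M0 x = 0" and pos: "0 < N x" "0 < r x" "0 < l x"
    and P: "N x*N x*(l'*r x - l x*r') - N x*l x*M' > 0"
  shows "\<exists>\<epsilon>>0. \<forall>m0. 0 < m0 \<and> m0 < \<epsilon> \<longrightarrow>
     (\<exists>D. ((\<lambda>y. money_multiplier (m0 + M0 y) (N y * r y) (N y * l y)) has_real_derivative D) (at x) \<and> 0 < D)"
proof -
  obtain \<epsilon> where e: "\<epsilon> > 0" "\<forall>m0. 0 < m0 \<and> m0 < \<epsilon> \<longrightarrow> m0*(N'*l x + N x*l') + (N x*N x*(l'*r x - l x*r') - N x*l x*M') > 0"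
    using small_pos[OF P] by blast
  show ?thesis
  proof (rule exI[of _ \<epsilon>], rule conjI[OF e(1)], intro allI impI)
    fix m0 :: real assume h: "0 < m0 \<and> m0 < \<epsilon>"
    have d1: "((\<lambda>y. m0 + M0 y) has_real_derivative 0 + M')(at x)" by (intro DERIV_add DERIV_const dM)
    have d2: "((\<lambda>y. N y * r y) has_real_derivative N' * r x + r' * N x)(at x)" by (intro DERIV_mult dN dr)
    have d3: "((\<lambda>y. N y * l y) has_real_derivative N' * l x + l' * N x)(at x)" by (intro DERIV_mult dN dl)
    have den: "m0 + M0 x + N x * r x > 0" using h pos M0x by (simp add: add_pos_pos)
    have num: "(N' * l x + l' * N x) * (m0 + M0 x + N x * r x) - N x * l x * (0 + M' + (N' * r x + r' * N x))
       = m0*(N'*l x + N x*l') + (N x*N x*(l'*r x - l x*r') - N x*l x*M')"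
      using M0x by (simp add: algebra_simps)
    show "\<exists>D. ((\<lambda>y. money_multiplier (m0 + M0 y) (N y * r y) (N y * l y)) has_real_derivative D) (at x) \<and> 0 < D"
    proof (intro exI conjI)
      show "((\<lambda>y. money_multiplier (m0 + M0 y) (N y * r y) (N y * l y)) has_real_derivative
        ((N' * l x + l' * N x) * (m0 + M0 x + N x * r x) - N x * l x * (0 + M' + (N' * r x + r' * N x))) / (m0 + M0 x + N x * r x)^2) (at x)"
        using mm_deriv[OF d1 d2 d3] den by simp
      show "0 < ((N' * l x + l' * N x) * (m0 + M0 x + N x * r x) - N x * l x * (0 + M' + (N' * r x + r' * N x))) / (m0 + M0 x + N x * r x)^2"
        using den num e(2) h by simp
    qed
  qed
qed

lemma small_m_neg:
  fixes N r l :: "real \<Rightarrow> real"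
  assumes dN: "(N has_real_derivative N')(at x)" and dr: "(r has_real_derivative r')(at x)"
    and dl: "(l has_real_derivative l')(at x)"
    and pos: "0 < N x" "0 < r x" "0 < l x"
    and P: "l'*r x - l x*r' < 0"
  shows "\<exists>\<epsilon>>0. \<forall>m0. 0 < m0 \<and> m0 < \<epsilon> \<longrightarrow>
     (\<exists>D. ((\<lambda>y. money_multiplier m0 (N y * r y) (N y * l y)) has_real_derivative D) (at x) \<and> D < 0)"
proof -
  have P': "- (N x*N x*(l'*r x - l x*r')) > 0" using P pos by (simp add: mult_less_0_iff)
  obtain \<epsilon> where e: "\<epsilon> > 0" "\<forall>m0. 0 < m0 \<and> m0 < \<epsilon> \<longrightarrow> m0*(-(N'*l x + N x*l')) + (- (N x*N x*(l'*r x - l x*r'))) > 0"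
    using small_pos[OF P'] by blast
  show ?thesis
  proof (rule exI[of _ \<epsilon>], rule conjI[OF e(1)], intro allI impI)
    fix m0 :: real assume h: "0 < m0 \<and> m0 < \<epsilon>"
    have d1: "((\<lambda>y. m0) has_real_derivative 0)(at x)" by (intro DERIV_const)
    have d2: "((\<lambda>y. N y * r y) has_real_derivative N' * r x + r' * N x)(at x)" by (intro DERIV_mult dN dr)
    have d3: "((\<lambda>y. N y * l y) has_real_derivative N' * l x + l' * N x)(at x)" by (intro DERIV_mult dN dl)
    have den: "m0 + N x * r x > 0" using h pos by (simp add: add_pos_pos)
    have num: "(N' * l x + l' * N x) * (m0 + N x * r x) - N x * l x * (0 + (N' * r x + r' * N x))
       = - (m0*(-(N'*l x + N x*l')) + (- (N x*N x*(l'*r x - l x*r'))))"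
      by (simp add: algebra_simps)
    have "(N' * l x + l' * N x) * (m0 + N x * r x) - N x * l x * (0 + (N' * r x + r' * N x)) < 0"
      using num e(2) h by simp
    thus "\<exists>D. ((\<lambda>y. money_multiplier m0 (N y * r y) (N y * l y)) has_real_derivative D) (at x) \<and> D < 0"
    proof (intro exI conjI)
      show "((\<lambda>y. money_multiplier m0 (N y * r y) (N y * l y)) has_real_derivative
        ((N' * l x + l' * N x) * (m0 + N x * r x) - N x * l x * (0 + (N' * r x + r' * N x))) / (m0 + N x * r x)^2) (at x)"
        using mm_deriv[OF d1 d2 d3] den by simp
    qed (use den in \<open>simp add: divide_neg_pos\<close>)
  qed
qed

lemma r0_alg: "(S::real) * c / D * L - s * d * c / D = c * (S * L - s * d) / D"
  by (simp add: divide_simps) (simp add: algebra_simps)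

lemma rv_alg:
  fixes S c D Ld j' L s d d' x :: real
  assumes "D \<noteq> 0" "d' = 0" "j' = 0"
  shows "(0 * D - S * c * (0 + (d' * c + 0 * x))) / (D * D) * L + Ld * j' * (S * c / D) -
          ((s * 1 * c + 0 * (s * d)) * D - s * d * c * (0 + (d' * c + 0 * x))) / (D * D) = - (s * c) / D"
proof -
  have "(0 * D - S * c * (0 + (d' * c + 0 * x))) / (D * D) * L + Ld * j' * (S * c / D) -
          ((s * 1 * c + 0 * (s * d)) * D - s * d * c * (0 + (d' * c + 0 * x))) / (D * D) = - ((s * c) * D / (D * D))"
    using assms by simp
  also have "\<dots> = - (s * c) / D" using assms(1) by simp
  finally show ?thesis .
qed

theorem proposition6:
  fixes \<sigma>\<^sub>1 \<sigma>\<^sub>2 \<sigma>\<^sub>3 k \<chi> :: real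
    and Linv g g' g'' e e' e'' :: "real \<Rightarrow> real"
  assumes sig: "0 < \<sigma>\<^sub>1" "0 < \<sigma>\<^sub>2" "0 < \<sigma>\<^sub>3" "\<sigma>\<^sub>1 + \<sigma>\<^sub>2 + \<sigma>\<^sub>3 = 1"
    and chi: "0 < \<chi>" "\<chi> < 1"
    and kpos: "0 < k"
    and Linv_dec: "\<forall>x y. 0 \<le> x \<longrightarrow> x < y \<longrightarrow> Linv y < Linv x"
    and g_der: "\<forall>x\<ge>0. (g has_real_derivative g' x) (at x within {0..})"
    and g'_der: "\<forall>x\<ge>0. (g' has_real_derivative g'' x) (at x within {0..})"
    and g_pos: "\<forall>x>0. 0 < g' x \<and> 0 < g'' x"
    and g0: "g 0 = 0" "g' 0 = 0"
    and e_der: "\<forall>x\<ge>0. (e has_real_derivative e' x) (at x within {0..})"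
    and e'_der: "\<forall>x\<ge>0. (e' has_real_derivative e'' x) (at x within {0..})"
    and e_pos: "\<forall>x>0. 0 < e' x \<and> 0 < e'' x"
    and e0: "e 0 = 0" "e' 0 = 0"
  shows
    \<comment> \<open>(i) ample reserves: small m, derivatives in i and in i_r\<close>
    "(\<forall>(\<delta>::real) (rt::real \<Rightarrow> real \<Rightarrow> real) (lt::real \<Rightarrow> real \<Rightarrow> real) (U::(real \<times> real) set) i0 ir0.
        0 \<le> \<delta> \<and> open U \<and> (i0, ir0) \<in> U \<and> 0 \<le> i0 \<and>
        (\<forall>i ir. (i, ir) \<in> U \<longrightarrow>
           ample_eq Linv \<sigma>\<^sub>2 \<sigma>\<^sub>3 \<delta> g g' e e' k \<chi> i ir (rt i ir) (lt i ir)) \<and>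
        (\<lambda>i. rt i ir0) differentiable (at i0) \<and> (\<lambda>i. lt i ir0) differentiable (at i0) \<and>
        (\<lambda>ir. rt i0 ir) differentiable (at ir0) \<and> (\<lambda>ir. lt i0 ir) differentiable (at ir0) \<and>
        Linv differentiable (at i0) \<and> Linv differentiable (at (e' (lt i0 ir0)))
      \<longrightarrow>
        (let n = (\<lambda>i ir. ample_nbanks Linv \<sigma>\<^sub>2 \<sigma>\<^sub>3 \<delta> g' e' ir (rt i ir) (lt i ir));
             m = (\<lambda>i. \<sigma>\<^sub>1 * Linv i)
         in (\<exists>\<epsilon>>0. \<forall>m0. 0 < m0 \<and> m0 < \<epsilon> \<longrightarrow>
               (\<exists>D. ((\<lambda>i. money_multiplier (m0 + (m i - m i0))
                          (n i ir0 * rt i ir0) (n i ir0 * lt i ir0))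
                      has_real_derivative D) (at i0) \<and> 0 < D)) \<and>
            (\<exists>\<epsilon>>0. \<forall>m0. 0 < m0 \<and> m0 < \<epsilon> \<longrightarrow>
               (\<exists>D. ((\<lambda>ir. money_multiplier m0
                          (n i0 ir * rt i0 ir) (n i0 ir * lt i0 ir))
                      has_real_derivative D) (at ir0) \<and> D < 0))))
     \<and>
    \<comment> \<open>(ii) ample reserves: derivative in the credit limit\<close>
    (\<forall>(rt::real \<Rightarrow> real) (lt::real \<Rightarrow> real) (U::real set) \<delta>0 i ir.
        open U \<and> \<delta>0 \<in> U \<and> 0 \<le> \<delta>0 \<and> 0 \<le> i \<and>
        (\<forall>\<delta>\<in>U. ample_eq Linv \<sigma>\<^sub>2 \<sigma>\<^sub>3 \<delta> g g' e e' k \<chi> i ir (rt \<delta>) (lt \<delta>)) \<and>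
        rt differentiable (at \<delta>0) \<and> lt differentiable (at \<delta>0) \<and>
        Linv differentiable (at (e' (lt \<delta>0))) \<and>
        \<delta>0 < Linv (e' (lt \<delta>0)) \<and> 0 < \<sigma>\<^sub>1 * Linv i \<and> \<chi> < 1
      \<longrightarrow>
        (let n = (\<lambda>\<delta>. ample_nbanks Linv \<sigma>\<^sub>2 \<sigma>\<^sub>3 \<delta> g' e' ir (rt \<delta>) (lt \<delta>))
         in \<exists>D. ((\<lambda>\<delta>. money_multiplier (\<sigma>\<^sub>1 * Linv i) (n \<delta> * rt \<delta>) (n \<delta> * lt \<delta>))
                   has_real_derivative D) (at \<delta>0) \<and> D < 0))
     \<and>
    \<comment> \<open>(ii) scarce reserves: derivative in the credit limit\<close>
    (\<forall>(rt::real \<Rightarrow> real) (idr::real \<Rightarrow> real) (il::real \<Rightarrow> real) (U::real set) \<delta>0 i ir.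
        open U \<and> \<delta>0 \<in> U \<and> 0 \<le> \<delta>0 \<and> 0 \<le> i \<and>
        (\<forall>\<delta>\<in>U. scarce_eq g g' e e' k \<chi> i ir (rt \<delta>) (idr \<delta>) (il \<delta>)) \<and>
        rt differentiable (at \<delta>0) \<and> idr differentiable (at \<delta>0) \<and> il differentiable (at \<delta>0) \<and>
        Linv differentiable (at (il \<delta>0)) \<and>
        \<delta>0 < Linv (il \<delta>0) \<and> 0 < \<sigma>\<^sub>1 * Linv i \<and> \<chi> < 1
      \<longrightarrow>
        (let r = (\<lambda>\<delta>. scarce_reserves Linv \<sigma>\<^sub>2 \<sigma>\<^sub>3 \<delta> \<chi> (idr \<delta>) (il \<delta>))
         in \<exists>D. ((\<lambda>\<delta>. money_multiplier (\<sigma>\<^sub>1 * Linv i) (r \<delta>) (acoef \<chi> * r \<delta>))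
                   has_real_derivative D) (at \<delta>0) \<and> D < 0))"
proof -
  have G1: "\<forall>p>0. (g has_real_derivative g' p)(at p)" by (rule at_deriv[OF g_der])
  have G2: "\<forall>p>0. (g' has_real_derivative g'' p)(at p)" by (rule at_deriv[OF g'_der])
  have E1: "\<forall>p>0. (e has_real_derivative e' p)(at p)" by (rule at_deriv[OF e_der])
  have E2: "\<forall>p>0. (e' has_real_derivative e'' p)(at p)" by (rule at_deriv[OF e'_der])
  show ?thesis
    apply (intro conjI allI impI)
    subgoal premises H for \<delta> rt lt U i0 ir0
    proof -
      have amp: "\<forall>i ir. (i, ir) \<in> U \<longrightarrow> ample_eq Linv \<sigma>\<^sub>2 \<sigma>\<^sub>3 \<delta> g g' e e' k \<chi> i ir (rt i ir) (lt i ir)"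
        and oU: "open U" and inU: "(i0, ir0) \<in> U" and i0: "0 \<le> i0" and d0: "0 \<le> \<delta>"
        using H by blast+
      have eq0: "ample_eq Linv \<sigma>\<^sub>2 \<sigma>\<^sub>3 \<delta> g g' e e' k \<chi> i0 ir0 (rt i0 ir0) (lt i0 ir0)"
        using amp inU by blast
      hence rt0: "0 < rt i0 ir0" and lt0: "0 < lt i0 ir0"
        and eqA: "(1 + e' (lt i0 ir0)) * (1 + ir0 - g' (rt i0 ir0)) = 1 + i0"
        and nb0: "0 < ample_nbanks Linv \<sigma>\<^sub>2 \<sigma>\<^sub>3 \<delta> g' e' ir0 (rt i0 ir0) (lt i0 ir0)"
        unfolding ample_eq_def by blast+
      have ep: "0 < e' (lt i0 ir0)" "0 < e'' (lt i0 ir0)" using e_pos lt0 by auto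
      have gp: "0 < g'' (rt i0 ir0)" using g_pos rt0 by auto
      have a0: "0 < 1 + ir0 - g' (rt i0 ir0)"
      proof -
        have "0 < (1 + e' (lt i0 ir0)) * (1 + ir0 - g' (rt i0 ir0))" using eqA i0 by simp
        thus ?thesis using ep by (simp add: zero_less_mult_iff)
      qed
      have den0: "(1 + (ir0 - g' (rt i0 ir0))) * rt i0 ir0 + lt i0 ir0 \<noteq> 0"
        using nb0 unfolding ample_nbanks_def by auto
      obtain Ld where Ld: "(Linv has_real_derivative Ld) (at (e' (lt i0 ir0)))"
        using H real_differentiable_def by blast
      obtain Lp where Lp: "(Linv has_real_derivative Lp) (at i0)"
        using H real_differentiable_def by blast
      have Lp0: "Lp \<le> 0" by (rule dec_deriv[OF Linv_dec i0 Lp])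
      have Gd: "(g' has_real_derivative g'' (rt i0 ir0))(at (rt i0 ir0))" using G2 rt0 by blast
      have Ed: "(e' has_real_derivative e'' (lt i0 ir0))(at (lt i0 ir0))" using E2 lt0 by blast
      show ?thesis unfolding Let_def
      proof (rule conjI)
        obtain r' where dr: "((\<lambda>i. rt i ir0) has_real_derivative r') (at i0)"
          using H real_differentiable_def by blast
        obtain l' where dl: "((\<lambda>i. lt i ir0) has_real_derivative l') (at i0)"
          using H real_differentiable_def by blast
        have ev: "eventually (\<lambda>y. (1 + e'(lt y ir0))*(1 + ir0 - g'(rt y ir0)) = 1 + y \<and>
              g'(rt y ir0)*rt y ir0 - g(rt y ir0) + e'(lt y ir0)*lt y ir0 - e(lt y ir0) = k) (nhds i0)"
          using ev_pair(1)[OF oU inU] by (rule eventually_mono) (use amp in \<open>auto simp: ample_eq_def\<close>)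
        note B = bank_eqs[OF G1 G2 E1 E2, of "\<lambda>i. rt i ir0" i0 "\<lambda>i. lt i ir0" r' l' "\<lambda>y. y" 1 "\<lambda>y. ir0" 0 k,
           OF rt0 lt0 dr dl DERIV_ident DERIV_const ev]
        have pos: "l' * rt i0 ir0 - lt i0 ir0 * r' > 0"
          by (rule alg_i[OF a0 ep(1) gp ep(2) rt0 lt0]) (use B in simp_all)
        note N = nb_deriv[of g' g'' "\<lambda>i. rt i ir0" i0 e' e'' "\<lambda>i. lt i ir0" Linv Ld r' l' "\<lambda>y. \<delta>" 0 "\<lambda>y. ir0" 0,
           OF Gd Ed Ld dr dl DERIV_const DERIV_const]
        show "\<exists>\<epsilon>>0. \<forall>m0. 0 < m0 \<and> m0 < \<epsilon> \<longrightarrow> (\<exists>D. ((\<lambda>i. money_multiplier (m0 + (\<sigma>\<^sub>1 * Linv i - \<sigma>\<^sub>1 * Linv i0))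
               (ample_nbanks Linv \<sigma>\<^sub>2 \<sigma>\<^sub>3 \<delta> g' e' ir0 (rt i ir0) (lt i ir0) * rt i ir0)
               (ample_nbanks Linv \<sigma>\<^sub>2 \<sigma>\<^sub>3 \<delta> g' e' ir0 (rt i ir0) (lt i ir0) * lt i ir0)) has_real_derivative D) (at i0) \<and> 0 < D)"
        proof (rule small_m[OF N[OF den0] dr dl, of "\<lambda>i. \<sigma>\<^sub>1 * Linv i - \<sigma>\<^sub>1 * Linv i0"])
          show "((\<lambda>i. \<sigma>\<^sub>1 * Linv i - \<sigma>\<^sub>1 * Linv i0) has_real_derivative \<sigma>\<^sub>1 * Lp - 0) (at i0)"
            by (intro DERIV_diff DERIV_cmult DERIV_const Lp)
          let ?N = "ample_nbanks Linv \<sigma>\<^sub>2 \<sigma>\<^sub>3 \<delta> g' e' ir0 (rt i0 ir0) (lt i0 ir0)"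
          have "?N*?N*(l' * rt i0 ir0 - lt i0 ir0 * r') > 0" using nb0 pos by simp
          moreover have "?N * lt i0 ir0 * (\<sigma>\<^sub>1 * Lp - 0) \<le> 0"
            using nb0 lt0 sig(1) Lp0 by (simp add: mult_le_0_iff)
          ultimately show "?N*?N*(l' * rt i0 ir0 - lt i0 ir0 * r') - ?N * lt i0 ir0 * (\<sigma>\<^sub>1 * Lp - 0) > 0"
            by linarith
        qed (use nb0 rt0 lt0 in simp_all)
      next
        obtain r' where dr: "((\<lambda>ir. rt i0 ir) has_real_derivative r') (at ir0)"
          using H real_differentiable_def by blast
        obtain l' where dl: "((\<lambda>ir. lt i0 ir) has_real_derivative l') (at ir0)"
          using H real_differentiable_def by blast
        have ev: "eventually (\<lambda>y. (1 + e'(lt i0 y))*(1 + y - g'(rt i0 y)) = 1 + i0 \<and>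
              g'(rt i0 y)*rt i0 y - g(rt i0 y) + e'(lt i0 y)*lt i0 y - e(lt i0 y) = k) (nhds ir0)"
          using ev_pair(2)[OF oU inU] by (rule eventually_mono) (use amp in \<open>auto simp: ample_eq_def\<close>)
        note B = bank_eqs[OF G1 G2 E1 E2, of "\<lambda>ir. rt i0 ir" ir0 "\<lambda>ir. lt i0 ir" r' l' "\<lambda>y. i0" 0 "\<lambda>y. y" 1 k,
           OF rt0 lt0 dr dl DERIV_const DERIV_ident ev]
        have neg: "l' * rt i0 ir0 - lt i0 ir0 * r' < 0"
          by (rule alg_ir[OF a0 ep(1) gp ep(2) rt0 lt0]) (use B in simp_all)
        note N = nb_deriv[of g' g'' "\<lambda>ir. rt i0 ir" ir0 e' e'' "\<lambda>ir. lt i0 ir" Linv Ld r' l' "\<lambda>y. \<delta>" 0 "\<lambda>y. y" 1,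
           OF Gd Ed Ld dr dl DERIV_const DERIV_ident]
        show "\<exists>\<epsilon>>0. \<forall>m0. 0 < m0 \<and> m0 < \<epsilon> \<longrightarrow> (\<exists>D. ((\<lambda>ir. money_multiplier m0
               (ample_nbanks Linv \<sigma>\<^sub>2 \<sigma>\<^sub>3 \<delta> g' e' ir (rt i0 ir) (lt i0 ir) * rt i0 ir)
               (ample_nbanks Linv \<sigma>\<^sub>2 \<sigma>\<^sub>3 \<delta> g' e' ir (rt i0 ir) (lt i0 ir) * lt i0 ir)) has_real_derivative D) (at ir0) \<and> D < 0)"
          by (rule small_m_neg[OF N[OF den0] dr dl]) (use nb0 rt0 lt0 neg in simp_all)
      qed
    qed
    subgoal premises H for rt lt U \<delta>0 i ir
    proof -
      have amp: "\<forall>\<delta>\<in>U. ample_eq Linv \<sigma>\<^sub>2 \<sigma>\<^sub>3 \<delta> g g' e e' k \<chi> i ir (rt \<delta>) (lt \<delta>)"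
        and oU: "open U" and inU: "\<delta>0 \<in> U" and i0: "0 \<le> i" and d0: "0 \<le> \<delta>0"
        and dlt: "\<delta>0 < Linv (e' (lt \<delta>0))" and mpos: "0 < \<sigma>\<^sub>1 * Linv i"
        using H by blast+
      have eq0: "ample_eq Linv \<sigma>\<^sub>2 \<sigma>\<^sub>3 \<delta>0 g g' e e' k \<chi> i ir (rt \<delta>0) (lt \<delta>0)"
        using amp inU by blast
      hence rt0: "0 < rt \<delta>0" and lt0: "0 < lt \<delta>0"
        and eqA: "(1 + e' (lt \<delta>0)) * (1 + ir - g' (rt \<delta>0)) = 1 + i"
        and nb0: "0 < ample_nbanks Linv \<sigma>\<^sub>2 \<sigma>\<^sub>3 \<delta>0 g' e' ir (rt \<delta>0) (lt \<delta>0)"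
        unfolding ample_eq_def by blast+
      have ep: "0 < e' (lt \<delta>0)" "0 < e'' (lt \<delta>0)" using e_pos lt0 by auto
      have gp: "0 < g'' (rt \<delta>0)" using g_pos rt0 by auto
      have a0: "0 < 1 + ir - g' (rt \<delta>0)"
      proof -
        have "0 < (1 + e' (lt \<delta>0)) * (1 + ir - g' (rt \<delta>0))" using eqA i0 by simp
        thus ?thesis using ep by (simp add: zero_less_mult_iff)
      qed
      have num0: "0 < (\<sigma>\<^sub>2 + \<sigma>\<^sub>3) * Linv (e' (lt \<delta>0)) - \<sigma>\<^sub>3 * \<delta>0"
      proof -
        have "(\<sigma>\<^sub>2 + \<sigma>\<^sub>3) * \<delta>0 < (\<sigma>\<^sub>2 + \<sigma>\<^sub>3) * Linv (e' (lt \<delta>0))" using dlt sig by simp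
        moreover have "\<sigma>\<^sub>3 * \<delta>0 \<le> (\<sigma>\<^sub>2 + \<sigma>\<^sub>3) * \<delta>0" using d0 sig by (simp add: algebra_simps)
        ultimately show ?thesis by linarith
      qed
      have den0: "0 < (1 + (ir - g' (rt \<delta>0))) * rt \<delta>0 + lt \<delta>0"
        using nb0 num0 unfolding ample_nbanks_def by (simp add: zero_less_divide_iff)
      obtain Ld where Ld: "(Linv has_real_derivative Ld) (at (e' (lt \<delta>0)))"
        using H real_differentiable_def by blast
      have Gd: "(g' has_real_derivative g'' (rt \<delta>0))(at (rt \<delta>0))" using G2 rt0 by blast
      have Ed: "(e' has_real_derivative e'' (lt \<delta>0))(at (lt \<delta>0))" using E2 lt0 by blast
      obtain r' where dr: "(rt has_real_derivative r') (at \<delta>0)"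
        using H real_differentiable_def by blast
      obtain l' where dl: "(lt has_real_derivative l') (at \<delta>0)"
        using H real_differentiable_def by blast
      have ev: "eventually (\<lambda>y. (1 + e'(lt y))*(1 + ir - g'(rt y)) = 1 + i \<and>
              g'(rt y)*rt y - g(rt y) + e'(lt y)*lt y - e(lt y) = k) (nhds \<delta>0)"
        unfolding eventually_nhds using oU inU amp by (auto simp: ample_eq_def)
      note B = bank_eqs[OF G1 G2 E1 E2, of rt \<delta>0 lt r' l' "\<lambda>y. i" 0 "\<lambda>y. ir" 0 k,
           OF rt0 lt0 dr dl DERIV_const DERIV_const ev]
      have z: "l' = 0" "r' = 0"
        by (rule alg_d[OF a0 ep(1) gp ep(2) rt0 lt0]; use B in simp)+
      note N = nb_deriv[of g' g'' rt \<delta>0 e' e'' lt Linv Ld r' l' "\<lambda>y. y" 1 "\<lambda>y. ir" 0 \<sigma>\<^sub>2 \<sigma>\<^sub>3,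
           OF Gd Ed Ld dr dl DERIV_ident DERIV_const]
      let ?Den = "(1 + (ir - g' (rt \<delta>0))) * rt \<delta>0 + lt \<delta>0"
      have N': "((\<lambda>y. ample_nbanks Linv \<sigma>\<^sub>2 \<sigma>\<^sub>3 y g' e' ir (rt y) (lt y)) has_real_derivative - \<sigma>\<^sub>3 / ?Den) (at \<delta>0)"
      proof -
        have eqv: "(((\<sigma>\<^sub>2+\<sigma>\<^sub>3)*(Ld*(e''(lt \<delta>0)*0)) - \<sigma>\<^sub>3*1) * ?Den
          - ((\<sigma>\<^sub>2 + \<sigma>\<^sub>3) * Linv (e' (lt \<delta>0)) - \<sigma>\<^sub>3 * \<delta>0) * ((0 - g''(rt \<delta>0)*0)*rt \<delta>0 + (1 + (ir - g'(rt \<delta>0)))*0 + 0))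
          / (?Den * ?Den) = - \<sigma>\<^sub>3 / ?Den"
        proof -
          have aux: "\<And>a D::real. D \<noteq> 0 \<Longrightarrow> (a * D) / (D * D) = a / D" by simp
          show ?thesis using aux[of ?Den "- \<sigma>\<^sub>3"] den0 by simp
        qed
        show ?thesis using N[unfolded z, OF less_imp_neq[OF den0, symmetric], unfolded eqv] .
      qed
      have Nneg: "- \<sigma>\<^sub>3 / ?Den < 0" using den0 sig by simp
      let ?Nf = "\<lambda>y. ample_nbanks Linv \<sigma>\<^sub>2 \<sigma>\<^sub>3 y g' e' ir (rt y) (lt y)"
      let ?m = "\<sigma>\<^sub>1 * Linv i"
      have d2: "((\<lambda>y. ?Nf y * rt y) has_real_derivative (- \<sigma>\<^sub>3 / ?Den) * rt \<delta>0 + r' * ?Nf \<delta>0)(at \<delta>0)"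
        by (intro DERIV_mult N' dr)
      have d3: "((\<lambda>y. ?Nf y * lt y) has_real_derivative (- \<sigma>\<^sub>3 / ?Den) * lt \<delta>0 + l' * ?Nf \<delta>0)(at \<delta>0)"
        by (intro DERIV_mult N' dl)
      have dpos: "0 < ?m + ?Nf \<delta>0 * rt \<delta>0" using mpos nb0 rt0 by (simp add: add_pos_pos)
      note MM = mm_deriv[OF DERIV_const[of ?m] d2 d3]
      have num: "((- \<sigma>\<^sub>3 / ?Den) * lt \<delta>0 + l' * ?Nf \<delta>0) * (?m + ?Nf \<delta>0 * rt \<delta>0)
          - ?Nf \<delta>0 * lt \<delta>0 * (0 + ((- \<sigma>\<^sub>3 / ?Den) * rt \<delta>0 + r' * ?Nf \<delta>0))
          = (- \<sigma>\<^sub>3 / ?Den) * lt \<delta>0 * ?m"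
      proof -
        have "\<And>q::real. (q * lt \<delta>0 + l' * ?Nf \<delta>0) * (?m + ?Nf \<delta>0 * rt \<delta>0)
          - ?Nf \<delta>0 * lt \<delta>0 * (0 + (q * rt \<delta>0 + r' * ?Nf \<delta>0)) = q * lt \<delta>0 * ?m"
          using z by (simp add: algebra_simps)
        thus ?thesis .
      qed
      have "(- \<sigma>\<^sub>3 / ?Den) * lt \<delta>0 * ?m < 0"
        by (rule mult_neg_pos[OF mult_neg_pos[OF Nneg lt0] mpos])
      hence "(((- \<sigma>\<^sub>3 / ?Den) * lt \<delta>0 + l' * ?Nf \<delta>0) * (?m + ?Nf \<delta>0 * rt \<delta>0)
          - ?Nf \<delta>0 * lt \<delta>0 * (0 + ((- \<sigma>\<^sub>3 / ?Den) * rt \<delta>0 + r' * ?Nf \<delta>0))) / (?m + ?Nf \<delta>0 * rt \<delta>0)^2 < 0"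
        unfolding num by (rule divide_neg_pos) (use dpos in simp)
      thus ?thesis unfolding Let_def using MM dpos by auto
    qed
    subgoal premises H for rt idr il U \<delta>0 i ir
    proof -
      have sc: "\<forall>\<delta>\<in>U. scarce_eq g g' e e' k \<chi> i ir (rt \<delta>) (idr \<delta>) (il \<delta>)"
        and oU: "open U" and inU: "\<delta>0 \<in> U" and i0: "0 \<le> i" and d0: "0 \<le> \<delta>0"
        and dlt: "\<delta>0 < Linv (il \<delta>0)" and mpos: "0 < \<sigma>\<^sub>1 * Linv i"
        using H by blast+
      let ?a = "acoef \<chi>"
      have apos: "0 < ?a" using chi unfolding acoef_def by simp
      have eq0: "scarce_eq g g' e e' k \<chi> i ir (rt \<delta>0) (idr \<delta>0) (il \<delta>0)" using sc inU by blast
      hence rt0: "0 < rt \<delta>0"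
        and ieq: "1 + i = (1 + idr \<delta>0) * (1 + il \<delta>0)"
        and ile: "e' (?a * rt \<delta>0) \<le> il \<delta>0"
        unfolding scarce_eq_def by blast+
      have art0: "0 < ?a * rt \<delta>0" using apos rt0 by simp
      have ep: "0 < e' (?a * rt \<delta>0)" "0 < e'' (?a * rt \<delta>0)" using e_pos art0 by auto
      have gp: "0 < g'' (rt \<delta>0)" using g_pos rt0 by auto
      have il0: "0 < il \<delta>0" using ep ile by linarith
      have idr0: "0 < 1 + idr \<delta>0"
      proof -
        have "0 < (1 + idr \<delta>0) * (1 + il \<delta>0)" using ieq i0 by linarith
        thus ?thesis using il0 by (simp add: zero_less_mult_iff)
      qed
      have ev: "eventually (\<lambda>y. scarce_eq g g' e e' k \<chi> i ir (rt y) (idr y) (il y)) (nhds \<delta>0)"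
        unfolding eventually_nhds using oU inU sc by blast
      obtain r' where dr: "(rt has_real_derivative r') (at \<delta>0)"
        using H real_differentiable_def by blast
      obtain d' where dd: "(idr has_real_derivative d') (at \<delta>0)"
        using H real_differentiable_def by blast
      obtain j' where dj: "(il has_real_derivative j') (at \<delta>0)"
        using H real_differentiable_def by blast
      obtain Ld where Ld: "(Linv has_real_derivative Ld) (at (il \<delta>0))"
        using H real_differentiable_def by blast
      have h1: "((\<lambda>y. g'(rt y)) has_real_derivative g''(rt \<delta>0)*r')(at \<delta>0)"
        by (rule DERIV_chain2[OF G2[rule_format, OF rt0] dr])
      have h2: "((\<lambda>y. g(rt y)) has_real_derivative g'(rt \<delta>0)*r')(at \<delta>0)"
        by (rule DERIV_chain2[OF G1[rule_format, OF rt0] dr])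
      have da: "((\<lambda>y. ?a * rt y) has_real_derivative ?a * r')(at \<delta>0)"
        by (rule DERIV_cmult[OF dr])
      have h3: "((\<lambda>y. e'(?a * rt y)) has_real_derivative e''(?a * rt \<delta>0)*(?a * r'))(at \<delta>0)"
        by (rule DERIV_chain2[OF E2[rule_format, OF art0] da])
      have h4: "((\<lambda>y. e(?a * rt y)) has_real_derivative e'(?a * rt \<delta>0)*(?a * r'))(at \<delta>0)"
        by (rule DERIV_chain2[OF E1[rule_format, OF art0] da])
      note dZ = DERIV_diff[OF DERIV_add[OF DERIV_diff[OF DERIV_mult[OF h1 dr] h2] DERIV_mult[OF h3 da]] h4]
      have evZ: "eventually (\<lambda>y. g'(rt y)*rt y - g(rt y) + e'(?a * rt y)*(?a * rt y) - e(?a * rt y) = k) (nhds \<delta>0)"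
        using ev by (rule eventually_mono) (simp add: scarce_eq_def)
      have "r' * (g''(rt \<delta>0)*rt \<delta>0 + e''(?a * rt \<delta>0)*?a*?a*rt \<delta>0) = 0"
        using deriv_eq_ev[OF dZ DERIV_const[of k] evZ] by (simp add: algebra_simps)
      moreover have "0 < g''(rt \<delta>0)*rt \<delta>0 + e''(?a * rt \<delta>0)*?a*?a*rt \<delta>0"
        using gp rt0 ep apos by (simp add: add_pos_pos)
      ultimately have r'0: "r' = 0" by simp
      note dI = DERIV_add[OF DERIV_diff[OF DERIV_const[of ir] h1] DERIV_mult[OF DERIV_diff[OF dj h3] DERIV_const[of ?a]]]
      have evI: "eventually (\<lambda>y. idr y = ir - g'(rt y) + (il y - e'(?a * rt y)) * ?a) (nhds \<delta>0)"
        using ev by (rule eventually_mono) (simp add: scarce_eq_def)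
      have d'eq: "d' = ?a * j'"
        using deriv_eq_ev[OF dd dI evI] r'0 by (simp add: algebra_simps)
      note dP = DERIV_mult[OF DERIV_add[OF DERIV_const[of 1] dd] DERIV_add[OF DERIV_const[of 1] dj]]
      have evP: "eventually (\<lambda>y. (1 + idr y) * (1 + il y) = 1 + i) (nhds \<delta>0)"
        using ev by (rule eventually_mono) (simp add: scarce_eq_def)
      have "j' * (?a * (1 + il \<delta>0) + (1 + idr \<delta>0)) = 0"
        using deriv_eq_ev[OF dP DERIV_const[of "1 + i"] evP] d'eq by (simp add: algebra_simps)
      moreover have "0 < ?a * (1 + il \<delta>0) + (1 + idr \<delta>0)" using apos il0 idr0 by (simp add: add_pos_pos)
      ultimately have j'0: "j' = 0" by simp
      hence d'0: "d' = 0" using d'eq by simp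
      have den0: "0 < 1 + idr \<delta>0 * \<chi>"
      proof -
        have "1 + idr \<delta>0 * \<chi> = (1 - \<chi>) + \<chi> * (1 + idr \<delta>0)" by (simp add: algebra_simps)
        moreover have "0 < \<chi> * (1 + idr \<delta>0)" using chi idr0 by simp
        ultimately show ?thesis using chi by linarith
      qed
      have den0': "1 + idr \<delta>0 * \<chi> \<noteq> 0" using den0 by simp
      note dden = DERIV_add[OF DERIV_const[of 1] DERIV_mult[OF dd DERIV_const[of \<chi>]]]
      note dA = DERIV_divide[OF DERIV_const[of "(\<sigma>\<^sub>2 + \<sigma>\<^sub>3) * \<chi>"] dden den0']
      note dL = DERIV_chain2[OF Ld dj]
      note dB = DERIV_mult[OF DERIV_cmult[OF DERIV_ident, of \<sigma>\<^sub>3] DERIV_const[of \<chi>]]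
      note dR0 = DERIV_diff[OF DERIV_mult[OF dA dL] DERIV_divide[OF dB dden den0']]
      let ?Rv = "- (\<sigma>\<^sub>3 * \<chi>) / (1 + idr \<delta>0 * \<chi>)"
      have dR: "((\<lambda>y. scarce_reserves Linv \<sigma>\<^sub>2 \<sigma>\<^sub>3 y \<chi> (idr y) (il y)) has_real_derivative ?Rv) (at \<delta>0)"
        unfolding scarce_reserves_def
      proof (rule DERIV_cong[OF dR0])
        have aux: "\<And>c D::real. D \<noteq> 0 \<Longrightarrow> (c * D) / (D * D) = c / D" by simp
        show "(0 * (1 + idr \<delta>0 * \<chi>) - (\<sigma>\<^sub>2 + \<sigma>\<^sub>3) * \<chi> * (0 + (d' * \<chi> + 0 * idr \<delta>0))) /
          ((1 + idr \<delta>0 * \<chi>) * (1 + idr \<delta>0 * \<chi>)) * Linv (il \<delta>0) +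
          Ld * j' * ((\<sigma>\<^sub>2 + \<sigma>\<^sub>3) * \<chi> / (1 + idr \<delta>0 * \<chi>)) -
          ((\<sigma>\<^sub>3 * 1 * \<chi> + 0 * (\<sigma>\<^sub>3 * \<delta>0)) * (1 + idr \<delta>0 * \<chi>) - \<sigma>\<^sub>3 * \<delta>0 * \<chi> * (0 + (d' * \<chi> + 0 * idr \<delta>0))) /
          ((1 + idr \<delta>0 * \<chi>) * (1 + idr \<delta>0 * \<chi>)) = ?Rv"
          by (rule rv_alg[OF den0' d'0 j'0])
      qed
      let ?r0 = "scarce_reserves Linv \<sigma>\<^sub>2 \<sigma>\<^sub>3 \<delta>0 \<chi> (idr \<delta>0) (il \<delta>0)"
      have r0eq: "?r0 = \<chi> * ((\<sigma>\<^sub>2 + \<sigma>\<^sub>3) * Linv (il \<delta>0) - \<sigma>\<^sub>3 * \<delta>0) / (1 + idr \<delta>0 * \<chi>)"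
        unfolding scarce_reserves_def by (rule r0_alg)
      have num0: "0 < (\<sigma>\<^sub>2 + \<sigma>\<^sub>3) * Linv (il \<delta>0) - \<sigma>\<^sub>3 * \<delta>0"
      proof -
        have "(\<sigma>\<^sub>2 + \<sigma>\<^sub>3) * \<delta>0 < (\<sigma>\<^sub>2 + \<sigma>\<^sub>3) * Linv (il \<delta>0)" using dlt sig by simp
        moreover have "\<sigma>\<^sub>3 * \<delta>0 \<le> (\<sigma>\<^sub>2 + \<sigma>\<^sub>3) * \<delta>0" using d0 sig by (simp add: algebra_simps)
        ultimately show ?thesis by linarith
      qed
      have r0pos: "0 < ?r0" unfolding r0eq using chi num0 den0 by simp
      let ?m = "\<sigma>\<^sub>1 * Linv i"
      have dpos: "0 < ?m + ?r0" using mpos r0pos by simp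
      note MM = mm_deriv[OF DERIV_const[of ?m] dR DERIV_cmult[OF dR, of ?a]]
      have num: "?a * ?Rv * (?m + ?r0) - ?a * ?r0 * (0 + ?Rv) = ?a * ?Rv * ?m" by (simp add: algebra_simps)
      have Rvneg: "?Rv < 0" using den0 sig chi by (simp add: divide_neg_pos)
      have "?a * ?Rv * ?m < 0"
        by (rule mult_neg_pos[OF mult_pos_neg[OF apos Rvneg] mpos])
      hence "(?a * ?Rv * (?m + ?r0) - ?a * ?r0 * (0 + ?Rv)) / (?m + ?r0)^2 < 0"
        unfolding num by (rule divide_neg_pos) (use dpos in simp)
      thus ?thesis unfolding Let_def using MM dpos by auto
    qed
    done
qed

end
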